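(* Let $\Gamma$ be a simple, undirected, connected graph of order $p\ge 2$, minimum degree $\delta$ and maximum degree $\Delta$. Then $$\gamma_{[3R]}(\Gamma)\le \left\lfloor \frac{4p}{\delta+1}\left(\ln\left(\frac{3(\delta+1)}{4}\right)+1\right)\right\rfloor.$$
   Context: For a graph $\Gamma=(V,E)$ and $h:V\to\{0,1,2,3,4\}$, let $AN(v)=\{w\in N(v):h(w)\ge 1\}$, $AN[v]=AN(v)\cup\{v\}$ and $h(S)=\sum_{u\in S}h(u)$. $h$ is a triple Roman dominating function (3RDF) if every $v$ with $h(v)<3$ satisfies $h(AN[v])\ge|AN(v)|+3$. The triple Roman domination number $\gamma_{[3R]}(\Gamma)$ is the minimum weight $h(V)$ of a 3RDF of $\Gamma$. *)

theory Defs
  imports Complex_Main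
begin

definition simple_graph :: "'a set \<Rightarrow> ('a \<Rightarrow> 'a \<Rightarrow> bool) \<Rightarrow> bool" where
  "simple_graph V E \<longleftrightarrow> finite V \<and> (\<forall>u v. E u v \<longrightarrow> u \<in> V \<and> v \<in> V)
     \<and> (\<forall>u v. E u v \<longrightarrow> E v u) \<and> (\<forall>v. \<not> E v v)"

definition neighbours :: "'a set \<Rightarrow> ('a \<Rightarrow> 'a \<Rightarrow> bool) \<Rightarrow> 'a \<Rightarrow> 'a set" where
  "neighbours V E v = {w \<in> V. E v w}"

definition degree :: "'a set \<Rightarrow> ('a \<Rightarrow> 'a \<Rightarrow> bool) \<Rightarrow> 'a \<Rightarrow> nat" where
  "degree V E v = card (neighbours V E v)"

definition min_degree :: "'a set \<Rightarrow> ('a \<Rightarrow> 'a \<Rightarrow> bool) \<Rightarrow> nat" where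
  "min_degree V E = Min (degree V E ` V)"

definition max_degree :: "'a set \<Rightarrow> ('a \<Rightarrow> 'a \<Rightarrow> bool) \<Rightarrow> nat" where
  "max_degree V E = Max (degree V E ` V)"

definition connected_graph :: "'a set \<Rightarrow> ('a \<Rightarrow> 'a \<Rightarrow> bool) \<Rightarrow> bool" where
  "connected_graph V E \<longleftrightarrow> (\<forall>u\<in>V. \<forall>v\<in>V. E\<^sup>*\<^sup>* u v)"

definition active_nbrs :: "'a set \<Rightarrow> ('a \<Rightarrow> 'a \<Rightarrow> bool) \<Rightarrow> ('a \<Rightarrow> nat) \<Rightarrow> 'a \<Rightarrow> 'a set" where
  "active_nbrs V E h v = {w \<in> neighbours V E v. h w \<ge> 1}"

definition is_3RDF :: "'a set \<Rightarrow> ('a \<Rightarrow> 'a \<Rightarrow> bool) \<Rightarrow> ('a \<Rightarrow> nat) \<Rightarrow> bool" where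
  "is_3RDF V E h \<longleftrightarrow> (\<forall>v. v \<notin> V \<longrightarrow> h v = 0) \<and> (\<forall>v\<in>V. h v \<le> 4) \<and>
     (\<forall>v\<in>V. h v < 3 \<longrightarrow>
        sum h (insert v (active_nbrs V E h v)) \<ge> card (active_nbrs V E h v) + 3)"

definition weight :: "'a set \<Rightarrow> ('a \<Rightarrow> nat) \<Rightarrow> nat" where
  "weight V h = sum h V"

definition triple_roman_domination_number :: "'a set \<Rightarrow> ('a \<Rightarrow> 'a \<Rightarrow> bool) \<Rightarrow> nat" where
  "triple_roman_domination_number V E = Min {weight V h | h. is_3RDF V E h}"

end

theory Submission imports Defs begin

definition wt :: "'a set \<Rightarrow> real \<Rightarrow> 'a set \<Rightarrow> real" where
  "wt A q S = (\<Prod>x\<in>S. q) * (\<Prod>x\<in>A-S. 1-q)"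

lemma wt_nonneg: "0 \<le> q \<Longrightarrow> q \<le> 1 \<Longrightarrow> 0 \<le> wt A q S"
  unfolding wt_def by (intro mult_nonneg_nonneg prod_nonneg) auto

lemma wt_sum1: "finite A \<Longrightarrow> (\<Sum>S\<in>Pow A. wt A q S) = 1"
  using prod_add[of A "\<lambda>_. q" "\<lambda>_. 1-q"] unfolding wt_def by simp

lemma wt_avoid:
  assumes "finite A" "B \<subseteq> A"
  shows "(\<Sum>S\<in>Pow A. wt A q S * (if B \<inter> S = {} then 1 else 0)) = (1-q)^card B"
proof -
  let ?f1 = "\<lambda>x. if x \<in> B then 0 else q"
  have "(\<Prod>x\<in>A. ?f1 x + (1-q)) = (\<Prod>x\<in>A. if x \<in> B then 1-q else 1)"
    by (rule prod.cong) auto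
  also have "\<dots> = (1-q)^card B"
    using assms by (simp add: prod.If_cases Int_absorb1)
  finally have L: "(\<Prod>x\<in>A. ?f1 x + (1-q)) = (1-q)^card B" .
  have R: "(\<Prod>x\<in>X. ?f1 x) * (\<Prod>x\<in>A-X. 1-q) = wt A q X * (if B \<inter> X = {} then 1 else 0)"
    if "X \<in> Pow A" for X
  proof (cases "B \<inter> X = {}")
    case True
    then have "(\<Prod>x\<in>X. ?f1 x) = (\<Prod>x\<in>X. q)" by (intro prod.cong) auto
    then show ?thesis using True by (simp add: wt_def)
  next
    case False
    then obtain y where "y \<in> X" "y \<in> B" by auto
    moreover have "finite X" using that assms(1) finite_subset by auto
    ultimately have "(\<Prod>x\<in>X. ?f1 x) = 0" by (intro prod_zero) auto
    then show ?thesis using False by simp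
  qed
  have "(\<Sum>S\<in>Pow A. wt A q S * (if B \<inter> S = {} then 1 else 0))
     = (\<Sum>X\<in>Pow A. (\<Prod>x\<in>X. ?f1 x) * (\<Prod>x\<in>A-X. 1-q))"
    by (rule sum.cong[OF refl]) (rule R[symmetric])
  also have "\<dots> = (\<Prod>x\<in>A. ?f1 x + (1-q))" by (rule prod_add[symmetric]) fact
  finally show ?thesis using L by simp
qed

lemma wt_mem:
  assumes "finite A" "y \<in> A"
  shows "(\<Sum>S\<in>Pow A. wt A q S * (if y \<in> S then 1 else 0)) = q"
proof -
  let ?f2 = "\<lambda>x. if x = y then 0 else 1-q"
  have "(\<Prod>x\<in>A. q + ?f2 x) = q * (\<Prod>x\<in>A-{y}. q + ?f2 x)"
    using assms by (simp add: prod.remove)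
  also have "(\<Prod>x\<in>A-{y}. q + ?f2 x) = 1" by (rule prod.neutral) auto
  finally have L: "(\<Prod>x\<in>A. q + ?f2 x) = q" by simp
  have R: "(\<Prod>x\<in>X. q) * (\<Prod>x\<in>A-X. ?f2 x) = wt A q X * (if y \<in> X then 1 else 0)"
    if "X \<in> Pow A" for X
  proof (cases "y \<in> X")
    case True
    then have "(\<Prod>x\<in>A-X. ?f2 x) = (\<Prod>x\<in>A-X. 1-q)" by (intro prod.cong) auto
    then show ?thesis using True by (simp add: wt_def)
  next
    case False
    have "(\<Prod>x\<in>A-X. ?f2 x) = 0" using False assms by (intro prod_zero) auto
    then show ?thesis using False by simp
  qed
  have "(\<Sum>S\<in>Pow A. wt A q S * (if y \<in> S then 1 else 0))
     = (\<Sum>X\<in>Pow A. (\<Prod>x\<in>X. q) * (\<Prod>x\<in>A-X. ?f2 x))"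
    by (rule sum.cong[OF refl]) (rule R[symmetric])
  also have "\<dots> = (\<Prod>x\<in>A. q + ?f2 x)" by (rule prod_add[symmetric]) fact
  finally show ?thesis using L by simp
qed

lemma wt_card:
  assumes "finite A"
  shows "(\<Sum>S\<in>Pow A. wt A q S * real (card S)) = real (card A) * q"
proof -
  have "(\<Sum>S\<in>Pow A. wt A q S * real (card S))
      = (\<Sum>S\<in>Pow A. \<Sum>y\<in>A. wt A q S * (if y \<in> S then 1 else 0))"
  proof (rule sum.cong)
    fix S assume "S \<in> Pow A"
    then have "S = A \<inter> S" by auto
    then have "real (card S) = (\<Sum>y\<in>A. if y \<in> S then 1 else 0)"
      using assms by (simp add: sum.If_cases)
    then show "wt A q S * real (card S) = (\<Sum>y\<in>A. wt A q S * (if y \<in> S then 1 else 0))"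
      by (simp add: sum_distrib_left)
  qed simp
  also have "\<dots> = (\<Sum>y\<in>A. \<Sum>S\<in>Pow A. wt A q S * (if y \<in> S then 1 else 0))"
    by (rule sum.swap)
  also have "\<dots> = (\<Sum>y\<in>A. q)" using wt_mem[OF assms] by simp
  finally show ?thesis by simp
qed


lemma exists_nbr:
  assumes G: "simple_graph V E" and C: "connected_graph V E" and p: "card V \<ge> 2"
    and v: "v \<in> V"
  shows "\<exists>w. w \<in> neighbours V E v"
proof -
  have fin: "finite V" using G by (simp add: simple_graph_def)
  obtain u where u: "u \<in> V" "u \<noteq> v"
  proof (rule ccontr)
    assume "\<not> thesis"
    with that have "V \<subseteq> {v}" by blast
    then have "card V \<le> card {v}" by (intro card_mono) auto
    then have "card V \<le> 1" by simp
    with p show False by simp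
  qed
  have "E\<^sup>*\<^sup>* v u" using C v u by (simp add: connected_graph_def)
  then show ?thesis
  proof (cases rule: converse_rtranclpE)
    case base then show ?thesis using u by simp
  next
    case (step w)
    then have "w \<in> V" using G by (simp add: simple_graph_def)
    then show ?thesis using step by (auto simp: neighbours_def)
  qed
qed

theorem proposition11:
  fixes V :: "'a set" and E :: "'a \<Rightarrow> 'a \<Rightarrow> bool"
  assumes "simple_graph V E" and "connected_graph V E" and "card V \<ge> 2"
  shows "real (triple_roman_domination_number V E)
     \<le> of_int \<lfloor>4 * real (card V) / (real (min_degree V E) + 1)
                  * (ln (3 * (real (min_degree V E) + 1) / 4) + 1)\<rfloor>"
proof -
  note G = assms(1)
  have fin: "finite V" using G by (simp add: simple_graph_def)
  have Vne: "V \<noteq> {}" using assms(3) by auto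
  define \<delta> where "\<delta> = min_degree V E"
  define p where "p = card V"
  define d where "d = real \<delta> + 1"
  have nsub: "neighbours V E v \<subseteq> V" for v by (auto simp: neighbours_def)
  have nfin: "finite (neighbours V E v)" for v using nsub fin finite_subset by blast
  have vnot: "v \<notin> neighbours V E v" for v using G by (simp add: neighbours_def simple_graph_def)
  have deg_ge: "\<delta> \<le> degree V E v" if "v \<in> V" for v
    unfolding \<delta>_def min_degree_def using fin that by simp
  have "Min (degree V E ` V) \<in> degree V E ` V" using fin Vne by (intro Min_in) auto
  then obtain v0 where v0: "v0 \<in> V" "\<delta> = degree V E v0"
    unfolding \<delta>_def min_degree_def by auto
  have "\<delta> \<ge> 1"
  proof -
    obtain w where "w \<in> neighbours V E v0" using exists_nbr[OF assms v0(1)] by blast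
    then have "card (neighbours V E v0) > 0" using nfin card_gt_0_iff by blast
    then show ?thesis using v0 by (simp add: degree_def)
  qed
  then have d2: "d \<ge> 2" by (simp add: d_def)
  define q where "q = ln (3 * d / 4) / d"
  have lnpos: "ln (3 * d / 4) > 0" using d2 by simp
  have lnle: "ln (3 * d / 4) \<le> 3 * d / 4 - 1" using d2 by (intro ln_le_minus_one) auto
  have q0: "0 \<le> q" using lnpos d2 by (simp add: q_def)
  have q1: "q \<le> 1" using lnle d2 by (simp add: q_def divide_le_eq)
  define NN where "NN v = insert v (neighbours V E v)" for v
  have NNsub: "v \<in> V \<Longrightarrow> NN v \<subseteq> V" for v using nsub by (auto simp: NN_def)
  have NNcard: "card (NN v) = degree V E v + 1" for v
    using nfin vnot by (simp add: NN_def degree_def)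
  define U where "U S = {v \<in> V. NN v \<inter> S = {}}" for S
  define F where "F S = 4 * card S + 3 * card (U S)" for S
  have Ucard: "real (card (U S)) = (\<Sum>v\<in>V. if NN v \<inter> S = {} then 1 else 0)" for S
  proof -
    have "U S = V \<inter> {v. NN v \<inter> S = {}}" by (auto simp: U_def)
    then show ?thesis using fin by (simp add: sum.If_cases)
  qed
  have EF: "(\<Sum>S\<in>Pow V. wt V q S * real (F S))
      = 4 * (\<Sum>S\<in>Pow V. wt V q S * real (card S))
        + 3 * (\<Sum>v\<in>V. \<Sum>S\<in>Pow V. wt V q S * (if NN v \<inter> S = {} then 1 else 0))"
  proof -
    have "(\<Sum>S\<in>Pow V. wt V q S * real (F S))
      = (\<Sum>S\<in>Pow V. 4 * (wt V q S * real (card S))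
          + 3 * (\<Sum>v\<in>V. wt V q S * (if NN v \<inter> S = {} then 1 else 0)))"
      by (rule sum.cong[OF refl]) (simp add: F_def Ucard sum_distrib_left algebra_simps)
    also have "\<dots> = 4 * (\<Sum>S\<in>Pow V. wt V q S * real (card S))
        + 3 * (\<Sum>S\<in>Pow V. \<Sum>v\<in>V. wt V q S * (if NN v \<inter> S = {} then 1 else 0))"
      by (simp add: sum.distrib sum_distrib_left)
    also have "(\<Sum>S\<in>Pow V. \<Sum>v\<in>V. wt V q S * (if NN v \<inter> S = {} then 1 else 0))
       = (\<Sum>v\<in>V. \<Sum>S\<in>Pow V. wt V q S * (if NN v \<inter> S = {} then 1 else 0))"
      by (rule sum.swap)
    finally show ?thesis .
  qed
  have pt: "(\<Sum>S\<in>Pow V. wt V q S * (if NN v \<inter> S = {} then 1 else 0)) \<le> 4 / (3 * d)"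
    if v: "v \<in> V" for v
  proof -
    have "(\<Sum>S\<in>Pow V. wt V q S * (if NN v \<inter> S = {} then 1 else 0)) = (1-q) ^ (degree V E v + 1)"
      using wt_avoid[OF fin NNsub[OF v], of q] NNcard[of v] by simp
    also have "\<dots> \<le> (1-q) ^ (\<delta> + 1)"
      using q0 q1 deg_ge[OF v] by (intro power_decreasing) auto
    also have "\<dots> \<le> exp (-q) ^ (\<delta> + 1)"
      using q1 exp_ge_add_one_self[of "-q"] by (intro power_mono) auto
    also have "\<dots> = exp (- (q * d))"
    proof -
      have "exp (-q) ^ (\<delta> + 1) = exp (real (\<delta> + 1) * (-q))" by (rule exp_of_nat_mult[symmetric])
      also have "real (\<delta> + 1) * (-q) = - (q * d)" by (simp add: d_def algebra_simps)
      finally show ?thesis .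
    qed
    also have "q * d = ln (3 * d / 4)" using d2 by (simp add: q_def)
    also have "exp (- ln (3 * d / 4)) = 4 / (3 * d)" using d2 by (simp add: exp_minus)
    finally show ?thesis .
  qed
  define B where "B = 4 * real p / d * (ln (3 * d / 4) + 1)"
  have EB: "(\<Sum>S\<in>Pow V. wt V q S * real (F S)) \<le> B"
  proof -
    have "(\<Sum>S\<in>Pow V. wt V q S * real (F S)) \<le> 4 * (real p * q) + 3 * (\<Sum>v\<in>V. 4 / (3 * d))"
      unfolding EF wt_card[OF fin] p_def using pt by (intro add_left_mono mult_left_mono sum_mono) auto
    also have "\<dots> = B" using d2 by (simp add: B_def q_def p_def field_simps)
    finally show ?thesis .
  qed
  obtain S0 where S0: "S0 \<in> Pow V" "\<And>S. S \<in> Pow V \<Longrightarrow> F S0 \<le> F S"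
  proof -
    have "finite (F ` Pow V)" "F ` Pow V \<noteq> {}" using fin by auto
    then obtain S0 where "S0 \<in> Pow V" "F S0 = Min (F ` Pow V)"
      using Min_in by (metis imageE)
    then show ?thesis using that fin by auto
  qed
  have FS0: "real (F S0) \<le> B"
  proof -
    have "real (F S0) = (\<Sum>S\<in>Pow V. wt V q S * real (F S0))"
      using wt_sum1[OF fin, of q] by (simp flip: sum_distrib_right)
    also have "\<dots> \<le> (\<Sum>S\<in>Pow V. wt V q S * real (F S))"
      using S0 wt_nonneg[OF q0 q1] by (intro sum_mono mult_left_mono) auto
    finally show ?thesis using EB by simp
  qed
  define h where "h v = (if v \<in> S0 then 4 else if v \<in> U S0 then 3 else 0::nat)" for v
  have US0: "U S0 \<subseteq> V - S0" by (auto simp: U_def NN_def)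
  have wh: "weight V h = F S0"
  proof -
    have e: "V \<inter> - S0 \<inter> U S0 = U S0" using US0 by blast
    have e2: "V \<inter> S0 = S0" using S0 by blast
    have "weight V h = (\<Sum>v\<in>V \<inter> S0. 4) + (\<Sum>v\<in>V \<inter> - S0. if v \<in> U S0 then 3 else 0)"
      unfolding weight_def h_def using fin by (simp add: sum.If_cases)
    also have "(\<Sum>v\<in>V \<inter> - S0. if v \<in> U S0 then 3 else 0) = (\<Sum>v\<in>V \<inter> - S0 \<inter> U S0. 3)"
      using fin by (simp add: sum.If_cases)
    finally show ?thesis unfolding e e2 by (simp add: F_def)
  qed
  have rdf: "is_3RDF V E h"
    unfolding is_3RDF_def
  proof (intro conjI ballI allI impI)
    fix v assume "v \<notin> V" then show "h v = 0" using S0 US0 by (auto simp: h_def)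
  next
    fix v assume "v \<in> V" then show "h v \<le> 4" by (simp add: h_def)
  next
    fix v assume v: "v \<in> V" and hv: "h v < 3"
    then have vS: "v \<notin> S0" "v \<notin> U S0" by (auto simp: h_def split: if_splits)
    then have h0: "h v = 0" by (simp add: h_def)
    from vS v obtain w where w: "w \<in> neighbours V E v" "w \<in> S0"
      by (auto simp: U_def NN_def)
    let ?A = "active_nbrs V E h v"
    have Afin: "finite ?A" using nfin by (simp add: active_nbrs_def)
    have wA: "w \<in> ?A" using w by (simp add: active_nbrs_def h_def)
    have vA: "v \<notin> ?A" using vnot by (simp add: active_nbrs_def)
    have "card (?A - {w}) \<le> sum h (?A - {w})"
    proof -
      have "card (?A - {w}) = (\<Sum>x\<in>?A - {w}. 1)" by simp
      also have "\<dots> \<le> sum h (?A - {w})" by (rule sum_mono) (simp add: active_nbrs_def)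
      finally show ?thesis .
    qed
    moreover have "sum h ?A = h w + sum h (?A - {w})" using Afin wA by (simp add: sum.remove)
    moreover have "h w = 4" using w by (simp add: h_def)
    moreover have "card (?A - {w}) + 1 = card ?A" using Afin wA
      by (metis card_Suc_Diff1 Suc_eq_plus1)
    ultimately show "card ?A + 3 \<le> sum h (insert v ?A)"
      using Afin vA h0 by simp
  qed
  have finW: "finite {weight V h | h. is_3RDF V E h}"
  proof (rule finite_subset)
    show "{weight V h | h. is_3RDF V E h} \<subseteq> {..4 * card V}"
    proof
      fix x assume "x \<in> {weight V h | h. is_3RDF V E h}"
      then obtain g where g: "x = weight V g" "is_3RDF V E g" by blast
      have "sum g V \<le> (\<Sum>v\<in>V. 4)" using g(2) by (intro sum_mono) (simp add: is_3RDF_def)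
      then show "x \<in> {..4 * card V}" using g by (simp add: weight_def)
    qed
  qed simp
  have "triple_roman_domination_number V E \<le> weight V h"
    unfolding triple_roman_domination_number_def using finW rdf by (intro Min_le) auto
  then have "real (triple_roman_domination_number V E) \<le> B" using wh FS0 by linarith
  then have "int (triple_roman_domination_number V E) \<le> \<lfloor>B\<rfloor>" by (simp add: le_floor_iff)
  then show ?thesis unfolding B_def d_def p_def \<delta>_def by linarith
qed

end
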